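(* Let $n\ge1$, $G\le S_n$ and $\chi:G\to\mathbb C$ an arbitrary function. The following are equivalent: (1) $d_\chi^G(A)=d_\chi^G(A^T)$ for every $A\in M_n(\mathbb C)$; (2) $d_\chi^G(AB)=d_\chi^G(BA)$ for all $A,B\in\mathbb S_n(\mathbb C)$; (3) $\hat\chi(\sigma)=\hat\chi(\sigma^{-1})$ for every $\sigma\in S_n$ (equivalently, $\chi(\sigma)=\chi(\sigma^{-1})$ for every $\sigma\in G$).
   Context: $\mathbb S_n(\mathbb C)$ is the set of complex symmetric $n\times n$ matrices. For $G\le S_n$ and $\chi:G\to\mathbb C$, $\hat\chi:S_n\to\mathbb C$ is the extension of $\chi$ by $0$ outside $G$ and $d_\chi^G(A)=\sum_{\sigma\in S_n}\hat\chi(\sigma)\prod_{i=1}^n A_{i\,\sigma(i)}$. *)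

theory Defs
  imports "HOL-Analysis.Analysis"
begin

text \<open>The symmetric group S_n on the index type 'n (with n = CARD('n)).\<close>
definition Sym :: "('n::finite \<Rightarrow> 'n) set" where
  "Sym = {p. p permutes (UNIV :: 'n set)}"

definition perm_subgroup :: "('n::finite \<Rightarrow> 'n) set \<Rightarrow> bool" where
  "perm_subgroup G \<longleftrightarrow> G \<subseteq> Sym \<and> id \<in> G \<and>
     (\<forall>p\<in>G. \<forall>q\<in>G. p \<circ> q \<in> G) \<and> (\<forall>p\<in>G. inv p \<in> G)"

definition chi_hat :: "('n \<Rightarrow> 'n) set \<Rightarrow> (('n \<Rightarrow> 'n) \<Rightarrow> complex) \<Rightarrow> ('n \<Rightarrow> 'n) \<Rightarrow> complex" where
  "chi_hat G chi \<sigma> = (if \<sigma> \<in> G then chi \<sigma> else 0)"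

definition gen_matrix_fun :: "('n::finite \<Rightarrow> 'n) set \<Rightarrow> (('n \<Rightarrow> 'n) \<Rightarrow> complex) \<Rightarrow> complex^'n^'n \<Rightarrow> complex" where
  "gen_matrix_fun G chi A = (\<Sum>\<sigma>\<in>Sym. chi_hat G chi \<sigma> * (\<Prod>i\<in>UNIV. A $ i $ \<sigma> i))"

definition sym_matrices :: "(complex^'n^'n) set" where
  "sym_matrices = {A. transpose A = A}"

end

theory Submission
  imports Defs
begin


lemma nilp: fixes p :: "'a::finite \<Rightarrow> 'a" assumes b: "bij p" shows "\<exists>N>0. p ^^ N = id"
proof -
  have "\<not> inj (\<lambda>k::nat. p ^^ k)"
  proof
    assume "inj (\<lambda>k::nat. p ^^ k)"
    hence "infinite (range (\<lambda>k::nat. p ^^ k))" by (rule range_inj_infinite)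
    thus False by simp
  qed
  then obtain i j :: nat where ij: "i < j" "p ^^ i = p ^^ j"
    unfolding inj_def by (metis linorder_neqE_nat)
  have ip: "inj (p ^^ i)" using b by (simp add: bij_is_inj inj_fn)
  have "j = i + (j - i)" using ij by simp
  hence "p ^^ j = (p ^^ i) \<circ> (p ^^ (j - i))" by (metis funpow_add)
  hence "(p ^^ i) \<circ> id = (p ^^ i) \<circ> (p ^^ (j - i))" using ij(2) by simp
  hence "id = p ^^ (j - i)" using ip by (simp add: fun_eq_iff inj_eq)
  thus ?thesis using ij by (metis zero_less_diff)
qed

lemma pw_app: fixes p :: "'a \<Rightarrow> 'a" and m n :: nat shows "(p ^^ m) ((p ^^ n) y) = (p ^^ (m + n)) y"
  by (simp add: funpow_add)

lemma pw_cancel: "p ^^ N = id \<Longrightarrow> p ^^ (N*c + a) = p ^^ a"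
proof -
  assume h: "p ^^ N = id"
  have "p ^^ (N*c) = id" by (simp add: funpow_mult[symmetric] h)
  thus ?thesis by (simp add: funpow_add)
qed

lemma pw_L:
  assumes h: "p ^^ N = id" and N: "N > 0" and e: "(p ^^ a) y = (p ^^ ((N-1)*b)) y"
  shows "(p ^^ ((N-1)*a)) y = (p ^^ b) y"
proof -
  have "(p ^^ ((N-1)*a + b)) ((p ^^ a) y) = (p ^^ ((N-1)*a + b)) ((p ^^ ((N-1)*b)) y)"
    using e by simp
  moreover have "(N-1)*a + b + a = N*a + b" using N by (cases N) auto
  moreover have "(N-1)*a + b + (N-1)*b = N*b + (N-1)*a" using N by (cases N) auto
  ultimately show ?thesis using pw_cancel[OF h] by (metis pw_app)
qed

lemma pw_L2:
  assumes h: "p ^^ N = id" and N: "N > 0" and e: "(p ^^ a) y = (p ^^ b) y"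
  shows "(p ^^ ((N-1)*a)) y = (p ^^ ((N-1)*b)) y"
proof -
  have "(p ^^ ((N-1)*(a+b))) ((p ^^ a) y) = (p ^^ ((N-1)*(a+b))) ((p ^^ b) y)"
    using e by simp
  moreover have "(N-1)*(a+b) + a = N*a + (N-1)*b" using N by (cases N) (auto simp: algebra_simps)
  moreover have "(N-1)*(a+b) + b = N*b + (N-1)*a" using N by (cases N) (auto simp: algebra_simps)
  ultimately show ?thesis using pw_cancel[OF h] by (metis pw_app)
qed

lemma two_involutions:
  fixes p :: "'a \<Rightarrow> 'a"
  assumes h: "p ^^ N = id" and N: "N > 0"
  shows "\<exists>\<alpha> \<beta>. (\<forall>x. \<alpha> (\<alpha> x) = x) \<and> (\<forall>x. \<beta> (\<beta> x) = x) \<and> (\<forall>x. p x = \<alpha> (\<beta> x))"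
proof -
  define Orb where "Orb x = range (\<lambda>k. (p ^^ k) x)" for x
  define r where "r x = (SOME y. y \<in> Orb x)" for x
  define k where "k x = (SOME k. (p ^^ k) (r x) = x)" for x
  define \<beta> where "\<beta> x = (p ^^ ((N-1) * k x)) (r x)" for x
  have Opx: "Orb (p x) = Orb x" for x
  proof
    show "Orb (p x) \<subseteq> Orb x" unfolding Orb_def
    proof
      fix z assume "z \<in> range (\<lambda>k. (p ^^ k) (p x))"
      then obtain m where "z = (p ^^ m) (p x)" by auto
      hence "z = (p ^^ (m+1)) x" using pw_app[of m p 1 x] by simp
      thus "z \<in> range (\<lambda>k. (p ^^ k) x)" by blast
    qed
    have "x = (p ^^ (N-1)) (p x)" using pw_app[of "N-1" p 1 x] N h by simp
    hence "(p ^^ m) x = (p ^^ (m + (N-1))) (p x)" for m by (metis pw_app)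
    thus "Orb x \<subseteq> Orb (p x)" unfolding Orb_def by auto
  qed
  have rp: "r (p x) = r x" for x unfolding r_def Opx ..
  have rpw: "r ((p ^^ m) x) = r x" for m x by (induction m) (auto simp: rp)
  have rO: "r x \<in> Orb x" for x unfolding r_def by (rule someI[of _ x]) (auto simp: Orb_def intro: range_eqI[of _ _ 0])
  have kx: "(p ^^ k x) (r x) = x" for x
  proof -
    obtain j where j: "r x = (p ^^ j) x" using rO[of x] unfolding Orb_def by auto
    have "(p ^^ ((N-1)*j)) (r x) = (p ^^ (N*j + 0)) x" unfolding j pw_app
      using N by (cases N) (auto simp: algebra_simps)
    hence "(p ^^ ((N-1)*j)) (r x) = x" using pw_cancel[OF h, of j 0] by simp
    thus ?thesis unfolding k_def by (rule someI)
  qed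
  have wd: "(p ^^ a) (r x) = x \<Longrightarrow> \<beta> x = (p ^^ ((N-1)*a)) (r x)" for a x
    unfolding \<beta>_def using pw_L2[OF h N, of "k x" "r x" a] kx[of x] by simp
  have bb: "\<beta> (\<beta> x) = x" for x
  proof -
    have rr: "r (r x) = r x" using rO[of x] rpw unfolding Orb_def by auto
    have r1: "r (\<beta> x) = r x" unfolding \<beta>_def rpw by (rule rr)
    have "(p ^^ k (\<beta> x)) (r x) = (p ^^ ((N-1) * k x)) (r x)" using kx[of "\<beta> x"] r1
      unfolding \<beta>_def by simp
    hence "(p ^^ ((N-1) * k (\<beta> x))) (r x) = (p ^^ k x) (r x)" by (rule pw_L[OF h N])
    thus ?thesis unfolding \<beta>_def[of "\<beta> x"] r1 kx .
  qed
  have bp: "\<beta> (p x) = (p ^^ (N-1)) (\<beta> x)" for x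
  proof -
    have "(p ^^ (k x + 1)) (r (p x)) = p x" using kx[of x] rp[of x] pw_app[of 1 p "k x" "r x"] by simp
    from wd[OF this] have "\<beta> (p x) = (p ^^ ((N-1) * (k x + 1))) (r x)" by (simp add: rp)
    also have "\<dots> = (p ^^ (N-1)) (\<beta> x)" proof -
      have "(N-1) * (k x + 1) = N - 1 + (N-1) * k x" by (simp add: add_mult_distrib2)
      thus ?thesis unfolding \<beta>_def pw_app by simp
    qed
    finally show ?thesis .
  qed
  define \<alpha> where "\<alpha> x = p (\<beta> x)" for x
  have aa: "\<alpha> (\<alpha> x) = x" for x
  proof -
    have "\<alpha> (\<alpha> x) = p ((p ^^ (N-1)) (\<beta> (\<beta> x)))" unfolding \<alpha>_def bp ..
    also have "\<dots> = (p ^^ N) x" using pw_app[of 1 p "N-1" x] N bb by simp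
    finally show ?thesis using h by simp
  qed
  have "\<forall>x. p x = \<alpha> (\<beta> x)" by (simp add: \<alpha>_def bb)
  with aa bb show ?thesis by blast
qed


definition pm :: "('n::finite \<Rightarrow> 'n) \<Rightarrow> complex^'n^'n" where
  "pm \<pi> = (\<chi> i j. if j = \<pi> i then 1 else 0)"

lemma d_pm:
  assumes "\<pi> \<in> Sym"
  shows "gen_matrix_fun G chi (pm \<pi>) = chi_hat G chi \<pi>"
proof -
  have "chi_hat G chi \<tau> * (\<Prod>i\<in>UNIV. pm \<pi> $ i $ \<tau> i) = (if \<tau> = \<pi> then chi_hat G chi \<tau> else 0)" for \<tau>
  proof (cases "\<tau> = \<pi>")
    case True thus ?thesis by (simp add: pm_def)
  next
    case False
    then obtain i where "\<tau> i \<noteq> \<pi> i" by auto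
    hence "(\<Prod>i\<in>UNIV. pm \<pi> $ i $ \<tau> i) = 0"
      by (intro prod_zero) (auto simp: pm_def)
    thus ?thesis using False by simp
  qed
  hence "gen_matrix_fun G chi (pm \<pi>) = (\<Sum>\<tau>\<in>Sym. if \<tau> = \<pi> then chi_hat G chi \<tau> else 0)"
    unfolding gen_matrix_fun_def by simp
  also have "\<dots> = chi_hat G chi \<pi>" using assms by (simp add: sum.delta' finite_permutations Sym_def)
  finally show ?thesis .
qed

lemma pm_mult: "pm a ** pm b = pm (b \<circ> a)"
proof -
  have "(\<Sum>k\<in>UNIV. (if k = a i then 1 else 0) * (if j = b k then 1 else (0::complex))) =
        (if j = b (a i) then 1 else 0)" for i j
    by (simp add: if_distrib[of "\<lambda>x. x * _"] sum.delta cong: if_cong)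
  thus ?thesis unfolding pm_def matrix_matrix_mult_def by (simp add: vec_eq_iff)
qed

lemma pm_sym: assumes "\<forall>x. \<alpha> (\<alpha> x) = x" shows "pm \<alpha> \<in> sym_matrices"
proof -
  have "(i = \<alpha> j) = (j = \<alpha> i)" for i j using assms by metis
  thus ?thesis unfolding sym_matrices_def pm_def transpose_def by (simp add: vec_eq_iff)
qed

lemma invol_Sym: assumes "\<forall>x. \<alpha> (\<alpha> x) = x" shows "\<alpha> \<in> Sym"
proof -
  have "\<forall>y. \<exists>!x. \<alpha> x = y"
  proof
    fix y show "\<exists>!x. \<alpha> x = y"
    proof (rule ex1I[of _ "\<alpha> y"])
      show "\<alpha> (\<alpha> y) = y" using assms by simp
      fix x assume "\<alpha> x = y"
      hence "\<alpha> (\<alpha> x) = \<alpha> y" by simp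
      thus "x = \<alpha> y" using assms by simp
    qed
  qed
  thus ?thesis by (simp add: Sym_def permutes_univ)
qed

lemma three_two:
  assumes "\<forall>A\<in>sym_matrices. \<forall>B\<in>sym_matrices. gen_matrix_fun G chi (A ** B) = gen_matrix_fun G chi (B ** A)"
    and s: "\<sigma> \<in> Sym"
  shows "chi_hat G chi \<sigma> = chi_hat G chi (inv \<sigma>)"
proof -
  have "bij \<sigma>" using s unfolding Sym_def by (simp add: permutes_bij)
  then obtain N where "\<sigma> ^^ N = id" "N > 0" using nilp by blast
  from two_involutions[OF this] obtain \<alpha> \<beta> where a: "\<forall>x. \<alpha> (\<alpha> x) = x"
    and b: "\<forall>x. \<beta> (\<beta> x) = x" and ab: "\<forall>x. \<sigma> x = \<alpha> (\<beta> x)" by blast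
  have se: "\<sigma> = \<alpha> \<circ> \<beta>" using ab by auto
  have ie: "inv \<sigma> = \<beta> \<circ> \<alpha>" unfolding se
    by (rule inv_unique_comp) (auto simp: a b fun_eq_iff)
  have "gen_matrix_fun G chi (pm \<beta> ** pm \<alpha>) = gen_matrix_fun G chi (pm \<alpha> ** pm \<beta>)"
    using assms(1) pm_sym[OF a] pm_sym[OF b] by blast
  hence "gen_matrix_fun G chi (pm \<sigma>) = gen_matrix_fun G chi (pm (inv \<sigma>))"
    unfolding pm_mult ie[symmetric] se[symmetric] .
  moreover have "inv \<sigma> \<in> Sym" using s unfolding Sym_def by (simp add: permutes_inv)
  ultimately show ?thesis using d_pm s by metis
qed

lemma one_three:
  assumes h: "\<forall>\<sigma>\<in>Sym. chi_hat G chi \<sigma> = chi_hat G chi (inv \<sigma>)"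
  shows "gen_matrix_fun G chi A = gen_matrix_fun G chi (transpose A)"
proof -
  let ?h = "\<lambda>\<tau>. (\<Prod>j\<in>UNIV. A $ j $ \<tau> j)"
  have pr: "(\<Prod>i\<in>UNIV. transpose A $ i $ \<sigma> i) = ?h (inv \<sigma>)" if "\<sigma> \<in> Sym" for \<sigma>
  proof -
    have p: "\<sigma> permutes UNIV" using that by (simp add: Sym_def)
    have "?h (inv \<sigma>) = (\<Prod>j\<in>\<sigma> ` UNIV. A $ j $ inv \<sigma> j)"
      using p by (simp add: permutes_surj)
    also have "\<dots> = (\<Prod>i\<in>UNIV. A $ \<sigma> i $ inv \<sigma> (\<sigma> i))"
      using p by (subst prod.reindex) (auto simp: permutes_inj)
    also have "\<dots> = (\<Prod>i\<in>UNIV. transpose A $ i $ \<sigma> i)"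
      using p by (simp add: permutes_inverses transpose_def)
    finally show ?thesis by simp
  qed
  have "gen_matrix_fun G chi (transpose A) = (\<Sum>\<sigma>\<in>Sym. chi_hat G chi \<sigma> * ?h (inv \<sigma>))"
    unfolding gen_matrix_fun_def using pr by (intro sum.cong) auto
  also have "\<dots> = (\<Sum>\<tau>\<in>Sym. chi_hat G chi (inv \<tau>) * ?h \<tau>)"
    by (rule sum.reindex_bij_witness[of _ inv inv])
       (auto simp: Sym_def permutes_inv permutes_inv_inv)
  also have "\<dots> = gen_matrix_fun G chi A"
    unfolding gen_matrix_fun_def using h by (intro sum.cong) auto
  finally show ?thesis by simp
qed

lemma two_one:
  assumes "\<forall>A :: complex^'n^'n. gen_matrix_fun G chi A = gen_matrix_fun G chi (transpose A)"
  shows "\<forall>A\<in>sym_matrices. \<forall>B\<in>sym_matrices. gen_matrix_fun G chi (A ** B) = gen_matrix_fun G chi (B ** (A :: complex^'n^'n::finite))"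
proof (intro ballI)
  fix A B :: "complex^'n^'n" assume "A \<in> sym_matrices" "B \<in> sym_matrices"
  hence "transpose (A ** B) = B ** A" by (simp add: matrix_transpose_mul sym_matrices_def)
  thus "gen_matrix_fun G chi (A ** B) = gen_matrix_fun G chi (B ** A)" using assms by metis
qed

theorem mainTheorem10:
  fixes G :: "('n::finite \<Rightarrow> 'n) set" and chi :: "('n \<Rightarrow> 'n) \<Rightarrow> complex"
  assumes "perm_subgroup G"
  shows "((\<forall>A :: complex^'n^'n. gen_matrix_fun G chi A = gen_matrix_fun G chi (transpose A))
          \<longleftrightarrow> (\<forall>A\<in>sym_matrices. \<forall>B\<in>sym_matrices. gen_matrix_fun G chi (A ** B) = gen_matrix_fun G chi (B ** A)))
       \<and> ((\<forall>A\<in>sym_matrices. \<forall>B\<in>sym_matrices. gen_matrix_fun G chi (A ** B) = gen_matrix_fun G chi (B ** A))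
          \<longleftrightarrow> (\<forall>\<sigma>\<in>Sym. chi_hat G chi \<sigma> = chi_hat G chi (inv \<sigma>)))
       \<and> ((\<forall>\<sigma>\<in>Sym. chi_hat G chi \<sigma> = chi_hat G chi (inv \<sigma>))
          \<longleftrightarrow> (\<forall>\<sigma>\<in>G. chi \<sigma> = chi (inv \<sigma>)))"
proof -
  have sub: "G \<subseteq> Sym" and cl: "\<forall>p\<in>G. inv p \<in> G" using assms by (auto simp: perm_subgroup_def)
  have p3: "(\<forall>\<sigma>\<in>Sym. chi_hat G chi \<sigma> = chi_hat G chi (inv \<sigma>))
          \<longleftrightarrow> (\<forall>\<sigma>\<in>G. chi \<sigma> = chi (inv \<sigma>))"
  proof
    assume h: "\<forall>\<sigma>\<in>Sym. chi_hat G chi \<sigma> = chi_hat G chi (inv \<sigma>)"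
    show "\<forall>\<sigma>\<in>G. chi \<sigma> = chi (inv \<sigma>)"
    proof
      fix \<sigma> :: "'n \<Rightarrow> 'n" assume "\<sigma> \<in> G"
      hence "\<sigma> \<in> Sym" "inv \<sigma> \<in> G" using sub cl by (auto simp del: )
      with h \<open>\<sigma> \<in> G\<close> show "chi \<sigma> = chi (inv \<sigma>)" unfolding chi_hat_def by force
    qed
  next
    assume h: "\<forall>\<sigma>\<in>G. chi \<sigma> = chi (inv \<sigma>)"
    show "\<forall>\<sigma>\<in>Sym. chi_hat G chi \<sigma> = chi_hat G chi (inv \<sigma>)"
    proof
      fix \<sigma> :: "'n \<Rightarrow> 'n" assume s: "\<sigma> \<in> Sym"
      have "inv (inv \<sigma>) = \<sigma>" using s by (simp add: Sym_def permutes_inv_inv)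
      hence "inv \<sigma> \<in> G \<longleftrightarrow> \<sigma> \<in> G" using cl by metis
      thus "chi_hat G chi \<sigma> = chi_hat G chi (inv \<sigma>)" using h by (auto simp: chi_hat_def)
    qed
  qed
  have "(\<forall>\<sigma>\<in>Sym. chi_hat G chi \<sigma> = chi_hat G chi (inv \<sigma>)) \<Longrightarrow> (\<forall>A :: complex^'n^'n. gen_matrix_fun G chi A = gen_matrix_fun G chi (transpose A))"
    using one_three by blast
  moreover note two_one[of G chi]
  moreover have "(\<forall>A\<in>sym_matrices. \<forall>B\<in>sym_matrices. gen_matrix_fun G chi (A ** B) = gen_matrix_fun G chi (B ** (A :: complex^'n^'n))) \<Longrightarrow> (\<forall>\<sigma>\<in>Sym. chi_hat G chi \<sigma> = chi_hat G chi (inv \<sigma>))"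
    using three_two by blast
  ultimately show ?thesis using p3 by blast
qed

end
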